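(* Let $d\ge 2$ and let $H$ be the class of decision trees of height at most $d$ over $\mathrm{dim}$-dimensional inputs in which nodes are permitted to test the same dimension as their ancestors. Then for any dataset of $n$ distinct points, the disagreement coefficient of $H$ satisfies $\theta=\Omega(n^{1/\mathrm{dim}})$.
   Context: A decision tree routes a point $x\in\mathbb{R}^{\mathrm{dim}}$ from the root; each internal node compares one coordinate $x_a$ with a threshold, each leaf carries a label in $\{0,1\}$. For a dataset $S$ of $n$ points: $D_S(h,h')=\frac1n\sum_{x\in S}\mathbb{I}(h(x)\ne h'(x))$, $B_H(h,r)=\{h'\in H:D_S(h,h')\le r\}$, $\mathrm{DIS}_S(V)=\{x\in S:\exists h_1,h_2\in V,h_1(x)\ne h_2(x)\}$, $\theta_h=\sup_{r>0}\frac{|\mathrm{DIS}_S(B_H(h,r))|}{rn}$, $\theta=\sup_{h\in H}\theta_h$. *)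

theory Defs
  imports "HOL-Analysis.Analysis"
begin

text \<open>Axis-aligned decision trees over inputs in real^'n (dimension = CARD('n)). No restriction on which
  coordinates are tested, so a node may test the same coordinate as an ancestor.\<close>

datatype 'n dtree = Leaf bool | Node 'n real "'n dtree" "'n dtree"

fun dt_eval :: "'n dtree \<Rightarrow> real^'n \<Rightarrow> bool" where
  "dt_eval (Leaf b) x = b"
| "dt_eval (Node a t l r) x = (if x $ a \<le> t then dt_eval l x else dt_eval r x)"

fun dt_height :: "'n dtree \<Rightarrow> nat" where
  "dt_height (Leaf b) = 0"
| "dt_height (Node a t l r) = Suc (max (dt_height l) (dt_height r))"

definition DT_class :: "nat \<Rightarrow> (real^'n \<Rightarrow> bool) set" where
  "DT_class d = {dt_eval T | T. dt_height T \<le> d}"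

definition emp_dist :: "'a set \<Rightarrow> ('a \<Rightarrow> bool) \<Rightarrow> ('a \<Rightarrow> bool) \<Rightarrow> real" where
  "emp_dist S h h' = real (card {x\<in>S. h x \<noteq> h' x}) / real (card S)"

definition emp_ball :: "('a \<Rightarrow> bool) set \<Rightarrow> 'a set \<Rightarrow> ('a \<Rightarrow> bool) \<Rightarrow> real \<Rightarrow> ('a \<Rightarrow> bool) set" where
  "emp_ball H S h r = {h'\<in>H. emp_dist S h h' \<le> r}"

definition DIS :: "'a set \<Rightarrow> ('a \<Rightarrow> bool) set \<Rightarrow> 'a set" where
  "DIS S V = {x\<in>S. \<exists>h1\<in>V. \<exists>h2\<in>V. h1 x \<noteq> h2 x}"

definition dis_coeff_at :: "('a \<Rightarrow> bool) set \<Rightarrow> 'a set \<Rightarrow> ('a \<Rightarrow> bool) \<Rightarrow> real" where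
  "dis_coeff_at H S h =
     (SUP r\<in>{0<..}. real (card (DIS S (emp_ball H S h r))) / (r * real (card S)))"

definition dis_coeff :: "('a \<Rightarrow> bool) set \<Rightarrow> 'a set \<Rightarrow> real" where
  "dis_coeff H S = (SUP h\<in>H. dis_coeff_at H S h)"

end

theory Submission imports Defs begin

lemma ratio_bdd:
  assumes "finite S" "S \<noteq> {}" "r > 0"
  shows "real (card (DIS S (emp_ball H S h r))) / (r * real (card S)) \<le> real (card S)"
proof (cases "DIS S (emp_ball H S h r) = {}")
  case True then show ?thesis by simp
next
  case False
  have n: "card S > 0" using assms card_gt_0_iff by blast
  obtain x h1 h2 where x: "x \<in> S" "h1 \<in> emp_ball H S h r" "h2 \<in> emp_ball H S h r" "h1 x \<noteq> h2 x"
    using False unfolding DIS_def by blast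
  then obtain g where g: "g \<in> emp_ball H S h r" "g x \<noteq> h x" by metis
  have "x \<in> {y\<in>S. h y \<noteq> g y}" using g x by auto
  hence "card {y\<in>S. h y \<noteq> g y} \<ge> 1" using assms(1)
    by (metis (no_types, lifting) One_nat_def Suc_leI card_gt_0_iff empty_iff finite_subset mem_Collect_eq subsetI)
  moreover have "real (card {y\<in>S. h y \<noteq> g y}) / real (card S) \<le> r"
    using g unfolding emp_ball_def emp_dist_def by auto
  ultimately have "1 / real (card S) \<le> r"
    by (smt (verit, best) divide_right_mono n of_nat_0_less_iff of_nat_1 of_nat_le_iff)
  hence r1: "r * real (card S) \<ge> 1" using n by (simp add: field_simps)
  have "card (DIS S (emp_ball H S h r)) \<le> card S"
    by (rule card_mono[OF assms(1)]) (auto simp: DIS_def)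
  hence "real (card (DIS S (emp_ball H S h r))) \<le> real (card S)" by simp
  then show ?thesis using r1
    by (smt (verit, ccfv_SIG) divide_le_eq of_nat_0_le_iff mult_le_cancel_left1)
qed

lemma at_ge:
  assumes "finite S" "S \<noteq> {}" "r > 0"
  shows "real (card (DIS S (emp_ball H S h r))) / (r * real (card S)) \<le> dis_coeff_at H S h"
  unfolding dis_coeff_at_def
proof (rule cSUP_upper)
  show "r \<in> {0<..}" using assms by simp
  show "bdd_above ((\<lambda>r. real (card (DIS S (emp_ball H S h r))) / (r * real (card S))) ` {0<..})"
    by (rule bdd_aboveI[where M="real (card S)"]) (auto intro: ratio_bdd[OF assms(1,2)])
qed

lemma at_le:
  assumes "finite S" "S \<noteq> {}"
  shows "dis_coeff_at H S h \<le> real (card S)"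
  unfolding dis_coeff_at_def
  by (rule cSUP_least) (auto intro: ratio_bdd[OF assms(1,2)])

lemma coeff_ge:
  assumes "finite S" "S \<noteq> {}" "h \<in> H"
  shows "dis_coeff_at H S h \<le> dis_coeff H S"
  unfolding dis_coeff_def
  by (rule cSUP_upper[OF assms(3)]) (rule bdd_aboveI[where M="real (card S)"], auto intro: at_le[OF assms(1,2)])

lemma count:
  fixes S :: "(real^'n) set" and k :: nat
  assumes "finite S"
  defines "T \<equiv> {p\<in>S. \<forall>a. card {q\<in>S. q$a = p$a} > k}"
  shows "real (card T) \<le> (real (card S) / real (k+1)) ^ CARD('n)"
proof -
  define V where "V a = {v \<in> (\<lambda>q. q$a) ` S. card {q\<in>S. q$a = v} > k}" for a
  have finV: "finite (V a)" for a using assms(1) unfolding V_def by auto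
  have Vb: "real (card (V a)) \<le> real (card S) / real (k+1)" for a
  proof -
    have "(\<Sum>v\<in>V a. card {q\<in>S. q$a = v}) = card (\<Union>v\<in>V a. {q\<in>S. q$a = v})"
      by (rule card_UN_disjoint[symmetric]) (use finV assms(1) in auto)
    also have "\<dots> \<le> card S" by (rule card_mono[OF assms(1)]) auto
    finally have s: "(\<Sum>v\<in>V a. card {q\<in>S. q$a = v}) \<le> card S" .
    have "(\<Sum>v\<in>V a. (k+1)) \<le> (\<Sum>v\<in>V a. card {q\<in>S. q$a = v})"
      by (rule sum_mono) (auto simp: V_def)
    hence "card (V a) * (k+1) \<le> card S" using s by simp
    hence "real (card (V a)) * real (k+1) \<le> real (card S)" by (metis of_nat_le_iff of_nat_mult)
    thus ?thesis by (simp add: field_simps)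
  qed
  have "inj_on vec_nth T" by (rule inj_onI) (simp add: vec_eq_iff fun_eq_iff)
  moreover have "vec_nth ` T \<subseteq> PiE UNIV V"
    unfolding T_def V_def by (auto simp: PiE_def extensional_def)
  ultimately have "card T \<le> card (PiE UNIV V)"
    by (intro card_inj_on_le) (auto intro!: finite_PiE finV)
  also have "\<dots> = (\<Prod>a\<in>UNIV. card (V a))" by (simp add: card_PiE)
  finally have "real (card T) \<le> (\<Prod>a\<in>UNIV. real (card (V a)))"
    by (metis of_nat_le_iff of_nat_prod)
  also have "\<dots> \<le> (\<Prod>a\<in>(UNIV::'n set). real (card S) / real (k+1))"
    by (rule prod_mono) (use Vb in auto)
  also have "\<dots> = (real (card S) / real (k+1)) ^ CARD('n)" by simp
  finally show ?thesis .
qed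


lemma cover:
  fixes S :: "(real^'n) set" and k :: nat
  assumes "finite S" "S \<noteq> {}" "d \<ge> 2"
  shows "S - {p\<in>S. \<forall>a. card {q\<in>S. q$a = p$a} > k}
     \<subseteq> DIS S (emp_ball (DT_class d) S (dt_eval (Leaf False)) (real k / real (card S)))"
proof
  fix p assume p: "p \<in> S - {p\<in>S. \<forall>a. card {q\<in>S. q$a = p$a} > k}"
  then obtain a where a: "card {q\<in>S. q$a = p$a} \<le> k" and pS: "p \<in> S"
    using not_less by blast
  define t where "t = (if {q$a | q. q \<in> S \<and> q$a < p$a} = {} then p$a - 1
                       else Max {q$a | q. q \<in> S \<and> q$a < p$a})"
  have fin: "finite {q$a | q. q \<in> S \<and> q$a < p$a}" using assms(1) by simp
  have tlt: "t < p$a" unfolding t_def using fin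
    by (auto simp: Max_less_iff)
  have tge: "q$a \<le> t" if "q \<in> S" "q$a < p$a" for q
    unfolding t_def using fin that by (auto intro!: Max_ge)
  define T where "T = Node a (p$a) (Node a t (Leaf False) (Leaf True)) (Leaf False)"
  have ev: "dt_eval T x = (t < x$a \<and> x$a \<le> p$a)" for x unfolding T_def by auto
  have hT: "dt_height T = 2" unfolding T_def by simp
  have set: "{x\<in>S. dt_eval (Leaf False) x \<noteq> dt_eval T x} = {q\<in>S. q$a = p$a}"
    using tlt tge by (force simp: ev)
  have n: "card S > 0" using assms card_gt_0_iff by blast
  have inH: "dt_eval T \<in> DT_class d" "dt_eval (Leaf False) \<in> DT_class d"
    unfolding DT_class_def using hT assms(3) by force+
  have "emp_dist S (dt_eval (Leaf False)) (dt_eval T) \<le> real k / real (card S)"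
    unfolding emp_dist_def set using a n by (simp add: divide_right_mono)
  moreover have "emp_dist S (dt_eval (Leaf False)) (dt_eval (Leaf False)) \<le> real k / real (card S)"
    unfolding emp_dist_def by simp
  ultimately have "dt_eval T \<in> emp_ball (DT_class d) S (dt_eval (Leaf False)) (real k / real (card S))"
     "dt_eval (Leaf False) \<in> emp_ball (DT_class d) S (dt_eval (Leaf False)) (real k / real (card S))"
    using inH unfolding emp_ball_def by auto
  moreover have "dt_eval T p \<noteq> dt_eval (Leaf False) p" using tlt ev by simp
  ultimately show "p \<in> DIS S (emp_ball (DT_class d) S (dt_eval (Leaf False)) (real k / real (card S)))"
    unfolding DIS_def using pS by blast
qed

lemma arith:
  fixes n :: real and D :: nat
  assumes n: "n \<ge> 1" and D: "D \<ge> 1"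
  defines "m \<equiv> n powr (1 / real D)"
  defines "k \<equiv> nat \<lceil>2 * n / m\<rceil>"
  shows "k > 0" "(n / real (k+1)) ^ D \<le> n / 2" "real k \<le> 3 * n / m"
proof -
  have m1: "m \<ge> 1" unfolding m_def using n by (simp add: ge_one_powr_ge_zero)
  have mn: "m \<le> n" unfolding m_def using n D powr_mono[of "1/real D" 1 n] by simp
  have mD: "m ^ D = n" unfolding m_def using n D
    by (simp add: powr_realpow[symmetric] powr_powr)
  have q: "2 * n / m \<ge> 2" using m1 mn by (simp add: field_simps)
  show "k > 0" unfolding k_def using q by linarith
  have k1: "real (k+1) \<ge> 2 * n / m" unfolding k_def using q by linarith
  have "n / real (k+1) \<le> n / (2 * n / m)"
    by (rule divide_left_mono) (use k1 n m1 q in auto)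
  also have "\<dots> = m / 2" using n m1 by (simp add: field_simps)
  finally have "(n / real (k+1)) ^ D \<le> (m/2) ^ D"
    by (rule power_mono) (use n in simp)
  also have "\<dots> = n / 2 ^ D" using mD by (simp add: power_divide)
  also have "\<dots> \<le> n / 2"
    by (rule divide_left_mono) (use n D in \<open>auto intro: power_increasing[of 1 D "2::real", simplified]\<close>)
  finally show "(n / real (k+1)) ^ D \<le> n / 2" .
  have "n / m \<ge> 1" using m1 mn by (simp add: field_simps)
  then show "real k \<le> 3 * n / m" unfolding k_def using q by linarith
qed

theorem theorem3:
  fixes d :: nat
  assumes "d \<ge> 2"
  shows "\<exists>c>0. \<exists>N::nat. \<forall>S :: (real^'n) set.
           finite S \<and> card S \<ge> N \<longrightarrow>
           dis_coeff (DT_class d :: (real^'n \<Rightarrow> bool) set) S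
             \<ge> c * real (card S) powr (1 / real CARD('n))"
proof (intro exI[of _ "1/6::real"] conjI allI impI exI[of _ "1::nat"])
  fix S :: "(real^'n) set"
  assume A: "finite S \<and> 1 \<le> card S"
  hence fin: "finite S" and ne: "S \<noteq> {}" by auto
  define n where "n = real (card S)"
  define D where "D = CARD('n)"
  define m where "m = n powr (1 / real D)"
  define k where "k = nat \<lceil>2 * n / m\<rceil>"
  have n1: "n \<ge> 1" using A n_def by simp
  have D1: "D \<ge> 1" unfolding D_def by (simp add: Suc_le_eq)
  note ar = arith[OF n1 D1, folded m_def, folded k_def]
  define T where "T = {p\<in>S. \<forall>a. card {q\<in>S. q$a = p$a} > k}"
  define h0 where "h0 = dt_eval (Leaf False :: 'n dtree)"
  define r where "r = real k / n"
  have r0: "r > 0" unfolding r_def using ar(1) n1 by simp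
  have cT: "real (card T) \<le> n / 2"
    using count[OF fin, of k] ar(2) unfolding T_def n_def D_def by simp
  have TS: "T \<subseteq> S" unfolding T_def by auto
  have "card (S - T) \<le> card (DIS S (emp_ball (DT_class d) S h0 r))"
    by (rule card_mono) (use cover[OF fin ne assms, of k] fin in \<open>auto simp: DIS_def T_def h0_def r_def n_def\<close>)
  moreover have "real (card (S - T)) = n - real (card T)"
    using card_Diff_subset[OF finite_subset[OF TS fin] TS] card_mono[OF fin TS] unfolding n_def by simp
  ultimately have cD: "real (card (DIS S (emp_ball (DT_class d) S h0 r))) \<ge> n / 2"
    using cT by linarith
  have m1: "m \<ge> 1" unfolding m_def using n1 by (simp add: ge_one_powr_ge_zero)
  have "1/6 * m = (n/2) / (3 * n / m)" using n1 m1 by (simp add: field_simps)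
  also have "\<dots> \<le> (n/2) / real k"
    by (rule divide_left_mono) (use ar n1 m1 in auto)
  also have "\<dots> \<le> real (card (DIS S (emp_ball (DT_class d) S h0 r))) / real k"
    by (rule divide_right_mono) (use cD in auto)
  also have "\<dots> = real (card (DIS S (emp_ball (DT_class d) S h0 r))) / (r * real (card S))"
    unfolding r_def n_def using n1 n_def by simp
  also have "\<dots> \<le> dis_coeff_at (DT_class d) S h0" by (rule at_ge[OF fin ne r0])
  also have "\<dots> \<le> dis_coeff (DT_class d) S"
    by (rule coeff_ge[OF fin ne]) (unfold h0_def DT_class_def, force)
  finally show "1/6 * real (card S) powr (1 / real CARD('n)) \<le> dis_coeff (DT_class d) S"
    unfolding m_def n_def D_def .
qed (simp)

end
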